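(* Let $(\Delta,\mathcal H)$ be a generic cut with associated simplicial complexes $K_\Delta,K_+,K_-$ on $\widetilde{[m]}=[m]\cup\{o\}$, and let $Z=\{\sigma\subset\widetilde{[m]}: F_\sigma\neq\varnothing\text{ and }F_\sigma\subset\Delta_+\setminus H_o\}$ where $F_\sigma=\bigcap_{i\in\sigma}H_i$. Then $K_-$ is the strong connected sum $K_+\#^ZK_\Delta$.
   Context: Let $\Delta\subset\mathbb R^n$ be an $n$-dimensional simple polytope $\Delta=\{x:\langle x,\lambda_i\rangle+\eta_i\ge0,\ i=1,\dots,m\}$ whose facets $H_i=\Delta\cap\{\langle x,\lambda_i\rangle+\eta_i=0\}$ are all nonempty. A generic cut is a hyperplane $\mathcal H=\{\langle x,\lambda_0\rangle+\xi=0\}$ in general position with the hyperplanes $\{\langle x,\lambda_i\rangle+\eta_i=0\}$ and with $H_o:=\mathcal H\cap\Delta\neq\varnothing$ (the facet indexed by $o$). Set $\Delta_\pm=\Delta\cap\{\pm(\langle x,\lambda_0\rangle+\xi)\ge0\}$, $K_\Delta=\{\sigma\subset[m]:\bigcap_{i\in\sigma}H_i\ne\varnothing\}\cup\{\varnothing\}$, $K_\pm=\{\sigma\subset\widetilde{[m]}:\bigcap_{i\in\sigma}(H_i\cap\Delta_\pm)\ne\varnothing\}\cup\{\varnothing\}$. Simplicial-complex notation: for $Z\subset K$, $\overline Z$ is the smallest subcomplex containing $Z$; $O_K(Z)=\{\sigma\in K:\sigma\supseteq\tau$ for some $\tau\in Z\}$; $\operatorname{Del}_Z(K)=K\setminus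 O_K(Z)$; pure means all maximal faces have the same dimension. Connected sum: for simplicial complexes $K_1,K_2$ on the same vertex set and $Z\subset K_1\cap K_2$ with $\varnothing\notin Z$ and $O_{K_1\cup K_2}(Z)\subset K_1\cap K_2$, $K_1\#^ZK_2:=\operatorname{Del}_Z(K_1\cup K_2)$. It is strong if $K_1,K_2,W:=K_1\cap K_2$ are pure of the same dimension and $Z=W\setminus\overline{K_1\setminus W}=W\setminus\overline{K_2\setminus W}$. *)

theory Defs
  imports "HOL-Analysis.Analysis"
begin

text \<open>Indices of the polytope's inequalities are 1..m; the index 0 plays
the role of the cut facet o. So lam 0, eta 0 are the data lambda_0, xi of the cut hyperplane.
The vertex set of all complexes is {0..m} (= [m] with o adjoined).\<close>

definition hyp :: "(nat \<Rightarrow> 'a::euclidean_space) \<Rightarrow> (nat \<Rightarrow> real) \<Rightarrow> nat \<Rightarrow> 'a set" where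
  "hyp lam eta i = {x. lam i \<bullet> x + eta i = 0}"

definition polyt :: "nat \<Rightarrow> (nat \<Rightarrow> 'a::euclidean_space) \<Rightarrow> (nat \<Rightarrow> real) \<Rightarrow> 'a set" where
  "polyt m lam eta = {x. \<forall>i\<in>{1..m}. lam i \<bullet> x + eta i \<ge> 0}"

definition facetH :: "nat \<Rightarrow> (nat \<Rightarrow> 'a::euclidean_space) \<Rightarrow> (nat \<Rightarrow> real) \<Rightarrow> nat \<Rightarrow> 'a set" where
  "facetH m lam eta i = polyt m lam eta \<inter> hyp lam eta i"

definition polyt_plus :: "nat \<Rightarrow> (nat \<Rightarrow> 'a::euclidean_space) \<Rightarrow> (nat \<Rightarrow> real) \<Rightarrow> 'a set" where
  "polyt_plus m lam eta = polyt m lam eta \<inter> {x. lam 0 \<bullet> x + eta 0 \<ge> 0}"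

definition polyt_minus :: "nat \<Rightarrow> (nat \<Rightarrow> 'a::euclidean_space) \<Rightarrow> (nat \<Rightarrow> real) \<Rightarrow> 'a set" where
  "polyt_minus m lam eta = polyt m lam eta \<inter> {x. - (lam 0 \<bullet> x + eta 0) \<ge> 0}"

definition simple_polytope :: "nat \<Rightarrow> (nat \<Rightarrow> 'a::euclidean_space) \<Rightarrow> (nat \<Rightarrow> real) \<Rightarrow> bool" where
  "simple_polytope m lam eta \<longleftrightarrow>
     bounded (polyt m lam eta) \<and>
     aff_dim (polyt m lam eta) = int DIM('a) \<and>
     (\<forall>v. v extreme_point_of (polyt m lam eta) \<longrightarrow>
          card {i\<in>{1..m}. lam i \<bullet> v + eta i = 0} = DIM('a)) \<and>
     (\<forall>i\<in>{1..m}. facetH m lam eta i \<noteq> {})"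

text \<open>Generic cut: the hyperplane indexed 0 is a genuine hyperplane in general position
with the hyperplanes indexed 1..m (whenever the normals of a subfamily sigma are linearly
independent, adding the cut hyperplane drops the dimension of the intersection by one,
the intersection being empty when card sigma = n), and H_o = cut \<inter> Delta is nonempty.\<close>
definition generic_cut :: "nat \<Rightarrow> (nat \<Rightarrow> 'a::euclidean_space) \<Rightarrow> (nat \<Rightarrow> real) \<Rightarrow> bool" where
  "generic_cut m lam eta \<longleftrightarrow>
     lam 0 \<noteq> 0 \<and>
     (\<forall>\<sigma>. \<sigma> \<subseteq> {1..m} \<and> inj_on lam \<sigma> \<and> independent (lam ` \<sigma>) \<longrightarrow>
        aff_dim ((\<Inter>i\<in>\<sigma>. hyp lam eta i) \<inter> hyp lam eta 0)
          = int DIM('a) - int (card \<sigma>) - 1) \<and>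
     facetH m lam eta 0 \<noteq> {}"

definition K_Delta :: "nat \<Rightarrow> (nat \<Rightarrow> 'a::euclidean_space) \<Rightarrow> (nat \<Rightarrow> real) \<Rightarrow> nat set set" where
  "K_Delta m lam eta = {\<sigma>. \<sigma> \<subseteq> {1..m} \<and> (\<Inter>i\<in>\<sigma>. facetH m lam eta i) \<noteq> {}} \<union> {{}}"

definition K_plus :: "nat \<Rightarrow> (nat \<Rightarrow> 'a::euclidean_space) \<Rightarrow> (nat \<Rightarrow> real) \<Rightarrow> nat set set" where
  "K_plus m lam eta = {\<sigma>. \<sigma> \<subseteq> {0..m} \<and>
      (\<Inter>i\<in>\<sigma>. facetH m lam eta i \<inter> polyt_plus m lam eta) \<noteq> {}} \<union> {{}}"

definition K_minus :: "nat \<Rightarrow> (nat \<Rightarrow> 'a::euclidean_space) \<Rightarrow> (nat \<Rightarrow> real) \<Rightarrow> nat set set" where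
  "K_minus m lam eta = {\<sigma>. \<sigma> \<subseteq> {0..m} \<and>
      (\<Inter>i\<in>\<sigma>. facetH m lam eta i \<inter> polyt_minus m lam eta) \<noteq> {}} \<union> {{}}"

definition cut_Z :: "nat \<Rightarrow> (nat \<Rightarrow> 'a::euclidean_space) \<Rightarrow> (nat \<Rightarrow> real) \<Rightarrow> nat set set" where
  "cut_Z m lam eta = {\<sigma>. \<sigma> \<subseteq> {0..m} \<and> (\<Inter>i\<in>\<sigma>. facetH m lam eta i) \<noteq> {} \<and>
      (\<Inter>i\<in>\<sigma>. facetH m lam eta i) \<subseteq> polyt_plus m lam eta - facetH m lam eta 0}"

definition simplicial_complex :: "'v set \<Rightarrow> 'v set set \<Rightarrow> bool" where
  "simplicial_complex V K \<longleftrightarrow> finite V \<and> {} \<in> K \<and> (\<forall>\<sigma>\<in>K. \<sigma> \<subseteq> V) \<and>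
     (\<forall>\<sigma>\<in>K. \<forall>\<tau>. \<tau> \<subseteq> \<sigma> \<longrightarrow> \<tau> \<in> K)"

text \<open>Smallest subcomplex containing Z (complexes always contain the empty face).\<close>
definition cl_cx :: "'v set set \<Rightarrow> 'v set set" where
  "cl_cx Z = {\<tau>. \<exists>\<sigma>\<in>Z. \<tau> \<subseteq> \<sigma>} \<union> {{}}"

definition O_cx :: "'v set set \<Rightarrow> 'v set set \<Rightarrow> 'v set set" where
  "O_cx K Z = {\<sigma>\<in>K. \<exists>\<tau>\<in>Z. \<tau> \<subseteq> \<sigma>}"

definition Del_cx :: "'v set set \<Rightarrow> 'v set set \<Rightarrow> 'v set set" where
  "Del_cx Z K = K - O_cx K Z"

text \<open>Pure of dimension d-1: every maximal face has d vertices.\<close>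
definition pure_card :: "'v set set \<Rightarrow> nat \<Rightarrow> bool" where
  "pure_card K d \<longleftrightarrow> (\<forall>\<sigma>\<in>K. (\<forall>\<tau>\<in>K. \<sigma> \<subseteq> \<tau> \<longrightarrow> \<tau> = \<sigma>) \<longrightarrow> card \<sigma> = d)"

definition conn_sum_ok :: "'v set \<Rightarrow> 'v set set \<Rightarrow> 'v set set \<Rightarrow> 'v set set \<Rightarrow> bool" where
  "conn_sum_ok V K1 K2 Z \<longleftrightarrow> simplicial_complex V K1 \<and> simplicial_complex V K2 \<and>
     Z \<subseteq> K1 \<inter> K2 \<and> {} \<notin> Z \<and> O_cx (K1 \<union> K2) Z \<subseteq> K1 \<inter> K2"

definition conn_sum :: "'v set set \<Rightarrow> 'v set set \<Rightarrow> 'v set set \<Rightarrow> 'v set set" where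
  "conn_sum K1 K2 Z = Del_cx Z (K1 \<union> K2)"

definition strong_conn_sum_ok :: "'v set \<Rightarrow> 'v set set \<Rightarrow> 'v set set \<Rightarrow> 'v set set \<Rightarrow> bool" where
  "strong_conn_sum_ok V K1 K2 Z \<longleftrightarrow> conn_sum_ok V K1 K2 Z \<and>
     (\<exists>d. pure_card K1 d \<and> pure_card K2 d \<and> pure_card (K1 \<inter> K2) d) \<and>
     Z = (K1 \<inter> K2) - cl_cx (K1 - (K1 \<inter> K2)) \<and>
     Z = (K1 \<inter> K2) - cl_cx (K2 - (K1 \<inter> K2))"

end

theory Submission
  imports Defs
begin


definition Polyh :: "(nat \<Rightarrow> 'a::euclidean_space) \<Rightarrow> (nat \<Rightarrow> real) \<Rightarrow> nat set \<Rightarrow> 'a set" where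
  "Polyh lam eta I = {x. \<forall>i\<in>I. 0 \<le> lam i \<bullet> x + eta i}"

definition act :: "(nat \<Rightarrow> 'a::euclidean_space) \<Rightarrow> (nat \<Rightarrow> real) \<Rightarrow> nat set \<Rightarrow> 'a \<Rightarrow> nat set" where
  "act lam eta I x = {i\<in>I. lam i \<bullet> x + eta i = 0}"

definition Fc :: "(nat \<Rightarrow> 'a::euclidean_space) \<Rightarrow> (nat \<Rightarrow> real) \<Rightarrow> nat set \<Rightarrow> nat set \<Rightarrow> 'a set" where
  "Fc lam eta I \<sigma> = Polyh lam eta I \<inter> {x. \<forall>i\<in>\<sigma>. lam i \<bullet> x + eta i = 0}"

lemma aff_zero:
  fixes a b :: "'a::euclidean_space"
  assumes "x \<in> open_segment a b" "0 \<le> l \<bullet> a + e" "0 \<le> l \<bullet> b + e" "l \<bullet> x + e = 0"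
  shows "l \<bullet> a + e = 0 \<and> l \<bullet> b + e = 0"
proof -
  obtain u where u: "0 < u" "u < 1" "x = (1 - u) *\<^sub>R a + u *\<^sub>R b"
    using assms(1) by (auto simp: in_segment)
  have "l \<bullet> ((1 - u) *\<^sub>R a + u *\<^sub>R b) + e = (1-u) * (l \<bullet> a + e) + u * (l \<bullet> b + e)"
    by (simp add: inner_add_right algebra_simps)
  then have "l \<bullet> x + e = (1-u) * (l \<bullet> a + e) + u * (l \<bullet> b + e)" using u(3) by simp
  then have "(1-u) * (l \<bullet> a + e) + u * (l \<bullet> b + e) = 0" using assms(4) by simp
  moreover have "(1-u) * (l \<bullet> a + e) \<ge> 0" "u * (l \<bullet> b + e) \<ge> 0"
    using u assms(2,3) by auto
  ultimately have "(1-u) * (l \<bullet> a + e) = 0" "u * (l \<bullet> b + e) = 0" by linarith+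
  then show ?thesis using u by auto
qed

lemma extreme_Fc:
  assumes "\<sigma> \<subseteq> I" "x extreme_point_of Fc lam eta I \<sigma>"
  shows "x extreme_point_of Polyh lam eta I"
proof -
  have xF: "x \<in> Fc lam eta I \<sigma>" and nF: "\<And>a b. a \<in> Fc lam eta I \<sigma> \<Longrightarrow> b \<in> Fc lam eta I \<sigma> \<Longrightarrow> x \<notin> open_segment a b"
    using assms(2) by (auto simp: extreme_point_of_def)
  show ?thesis unfolding extreme_point_of_def
  proof (intro conjI ballI)
    show "x \<in> Polyh lam eta I" using xF by (simp add: Fc_def)
  next
    fix a b assume a: "a \<in> Polyh lam eta I" and b: "b \<in> Polyh lam eta I"
    show "x \<notin> open_segment a b"
    proof
      assume xs: "x \<in> open_segment a b"
      have "a \<in> Fc lam eta I \<sigma> \<and> b \<in> Fc lam eta I \<sigma>"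
        unfolding Fc_def
      proof (intro conjI IntI CollectI ballI)
        fix i assume i: "i \<in> \<sigma>"
        have "lam i \<bullet> a + eta i = 0 \<and> lam i \<bullet> b + eta i = 0"
          apply (rule aff_zero[OF xs])
          using a b i assms(1) xF by (auto simp: Polyh_def Fc_def)
        then show "lam i \<bullet> a + eta i = 0" "lam i \<bullet> b + eta i = 0" by auto
      qed (use a b in auto)
      then show False using nF xs by blast
    qed
  qed
qed

lemma closed_Polyh: "closed (Polyh lam eta I)"
proof -
  have "Polyh lam eta I = (\<Inter>i\<in>I. {x. 0 \<le> lam i \<bullet> x + eta i})" by (auto simp: Polyh_def)
  moreover have "closed {x. 0 \<le> lam i \<bullet> x + eta i}" for i
  proof -
    have "continuous_on UNIV (\<lambda>y. lam i \<bullet> y + eta i)" by (auto intro!: continuous_intros)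
    then show ?thesis using closed_Collect_le[OF continuous_on_const, of "\<lambda>y. lam i \<bullet> y + eta i" 0] by blast
  qed
  ultimately show ?thesis by auto
qed

lemma closed_Fc: "closed (Fc lam eta I \<sigma>)"
proof -
  have "Fc lam eta I \<sigma> = Polyh lam eta I \<inter> (\<Inter>i\<in>\<sigma>. {x. lam i \<bullet> x + eta i = 0})" by (auto simp: Fc_def)
  moreover have "closed {x. lam i \<bullet> x + eta i = 0}" for i
  proof -
    have "continuous_on UNIV (\<lambda>y. lam i \<bullet> y + eta i)" by (auto intro!: continuous_intros)
    then show ?thesis using closed_Collect_eq[OF _ continuous_on_const, of "\<lambda>y. lam i \<bullet> y + eta i" 0] by blast
  qed
  then have "closed (\<Inter>i\<in>\<sigma>. {x. lam i \<bullet> x + eta i = 0})" by (intro closed_INT) blast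
  then have "closed (Polyh lam eta I \<inter> (\<Inter>i\<in>\<sigma>. {x. lam i \<bullet> x + eta i = 0}))"
    by (intro closed_Int closed_Polyh)
  ultimately show ?thesis by simp
qed

lemma convex_Fc: "convex (Fc lam eta I \<sigma>)"
proof (rule convexI)
  fix x y :: 'a and u v :: real
  assume x: "x \<in> Fc lam eta I \<sigma>" and y: "y \<in> Fc lam eta I \<sigma>" and uv: "0 \<le> u" "0 \<le> v" "u + v = 1"
  have eq: "lam i \<bullet> (u *\<^sub>R x + v *\<^sub>R y) + eta i = u * (lam i \<bullet> x + eta i) + v * (lam i \<bullet> y + eta i)" for i
  proof -
    have "eta i = u * eta i + v * eta i" using uv(3) by (metis distrib_right mult_1)
    then show ?thesis by (simp add: inner_add_right algebra_simps)
  qed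
  show "u *\<^sub>R x + v *\<^sub>R y \<in> Fc lam eta I \<sigma>"
    using x y uv by (auto simp: Fc_def Polyh_def eq simp del: inner_add_right inner_scaleR_right)
qed

lemma orth_span_zero:
  fixes d :: "'a::euclidean_space"
  assumes "span S = UNIV" "\<And>s. s \<in> S \<Longrightarrow> s \<bullet> d = 0"
  shows "d = 0"
proof -
  have d1: "d \<in> span S" using assms(1) by simp
  have d2: "orthogonal d y" if "y \<in> S" for y
    using assms(2)[OF that] unfolding orthogonal_def by (simp add: inner_commute)
  have "orthogonal d d"
    by (rule orthogonal_to_span[OF d1 d2])
  then show ?thesis by (simp add: orthogonal_self)
qed

lemma Fc_act_single:
  assumes "span (lam ` act lam eta I x) = UNIV" "y \<in> Fc lam eta I (act lam eta I x)"
  shows "y = x"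
proof -
  have "y - x = 0"
  proof (rule orth_span_zero[OF assms(1)])
    fix s assume "s \<in> lam ` act lam eta I x"
    then obtain i where i: "i \<in> act lam eta I x" "s = lam i" by auto
    then have "lam i \<bullet> x + eta i = 0" "lam i \<bullet> y + eta i = 0"
      using assms(2) by (auto simp: act_def Fc_def)
    then show "s \<bullet> (y - x) = 0" using i by (simp add: inner_diff_right)
  qed
  then show ?thesis by simp
qed

lemma span_extreme:
  assumes "x \<in> Polyh lam eta I" "span (lam ` act lam eta I x) = UNIV"
  shows "x extreme_point_of Polyh lam eta I"
  unfolding extreme_point_of_def
proof (intro conjI ballI assms(1))
  fix a b assume a: "a \<in> Polyh lam eta I" and b: "b \<in> Polyh lam eta I"
  show "x \<notin> open_segment a b"
  proof
    assume xs: "x \<in> open_segment a b"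
    have H: "lam i \<bullet> a + eta i = 0 \<and> lam i \<bullet> b + eta i = 0" if i: "i \<in> act lam eta I x" for i
      by (rule aff_zero[OF xs]) (use a b i in \<open>auto simp: Polyh_def act_def\<close>)
    have aF: "a \<in> Fc lam eta I (act lam eta I x)" and bF: "b \<in> Fc lam eta I (act lam eta I x)"
      using a b H by (auto simp: Fc_def)
    have ax: "a = x" by (rule Fc_act_single[OF assms(2) aF])
    have bx: "b = x" by (rule Fc_act_single[OF assms(2) bF])
    have "x \<in> open_segment x x" using xs unfolding ax bx .
    then show False by (simp only: open_segment_idem empty_iff)
  qed
qed

lemma extreme_span:
  assumes fin: "finite I" and ext: "x extreme_point_of Polyh lam eta I"
  shows "span (lam ` act lam eta I x) = UNIV"
proof (rule ccontr)
  assume "span (lam ` act lam eta I x) \<noteq> UNIV"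
  then obtain d where d: "d \<noteq> 0" "\<And>y. y \<in> span (lam ` act lam eta I x) \<Longrightarrow> d \<bullet> y = 0"
    using span_not_UNIV_orthogonal by blast
  have dact: "lam i \<bullet> d = 0" if "i \<in> act lam eta I x" for i
    using d(2)[of "lam i"] that by (simp add: span_base inner_commute)
  have xP: "x \<in> Polyh lam eta I" using ext by (simp add: extreme_point_of_def)
  define U where "U = (\<Inter>i\<in>I - act lam eta I x. {y. 0 < lam i \<bullet> y + eta i})"
  have "open U" unfolding U_def
  proof (rule open_INT)
    show "finite (I - act lam eta I x)" using fin by simp
    show "\<forall>i\<in>I - act lam eta I x. open {y. 0 < lam i \<bullet> y + eta i}"
    proof
      fix i
      have "continuous_on UNIV (\<lambda>y. lam i \<bullet> y + eta i)" by (auto intro!: continuous_intros)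
      then show "open {y. 0 < lam i \<bullet> y + eta i}"
        using open_Collect_less[of "\<lambda>y. 0" "\<lambda>y. lam i \<bullet> y + eta i"] by simp
    qed
  qed
  moreover have "x \<in> U" using xP unfolding U_def Polyh_def act_def by fastforce
  ultimately obtain e where e: "e > 0" "ball x e \<subseteq> U" using openE by blast
  define c where "c = e / 2 / norm d"
  have c: "c > 0" using e d(1) by (simp add: c_def)
  have nc: "norm (c *\<^sub>R d) < e" using e d(1) by (simp add: c_def)
  have inP: "x + t *\<^sub>R d \<in> Polyh lam eta I" if "norm (t *\<^sub>R d) < e" for t
    unfolding Polyh_def
  proof (safe)
    fix i assume i: "i \<in> I"
    show "0 \<le> lam i \<bullet> (x + t *\<^sub>R d) + eta i"
    proof (cases "i \<in> act lam eta I x")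
      case True
      then show ?thesis using dact[OF True] by (simp add: inner_add_right act_def)
    next
      case False
      have "x + t *\<^sub>R d \<in> ball x e" using that by (simp add: dist_norm)
      then have "x + t *\<^sub>R d \<in> U" using e by blast
      then have "0 < lam i \<bullet> (x + t *\<^sub>R d) + eta i" using False i unfolding U_def by blast
      then show ?thesis by simp
    qed
  qed
  have a: "x + c *\<^sub>R d \<in> Polyh lam eta I" by (rule inP[OF nc])
  have b: "x + (- c) *\<^sub>R d \<in> Polyh lam eta I" by (rule inP) (use nc in simp)
  have ne: "x + c *\<^sub>R d \<noteq> x + (- c) *\<^sub>R d"
  proof
    assume "x + c *\<^sub>R d = x + (- c) *\<^sub>R d"
    then have "(2*c) *\<^sub>R d = 0" by (simp add: scaleR_2[symmetric] algebra_simps)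
    then show False using c d(1) by simp
  qed
  have mid: "midpoint (x + c *\<^sub>R d) (x + (- c) *\<^sub>R d) = x"
    by (simp add: midpoint_def scaleR_add_right[symmetric] scaleR_2[symmetric])
  have "midpoint (x + c *\<^sub>R d) (x + (- c) *\<^sub>R d) \<in> open_segment (x + c *\<^sub>R d) (x + (- c) *\<^sub>R d)"
    by (subst midpoint_in_open_segment) (rule ne)
  then have xin: "x \<in> open_segment (x + c *\<^sub>R d) (x + (- c) *\<^sub>R d)" by (simp only: mid)
  have "\<forall>a\<in>Polyh lam eta I. \<forall>b\<in>Polyh lam eta I. x \<notin> open_segment a b"
    using ext unfolding extreme_point_of_def by blast
  from this a have "\<forall>b\<in>Polyh lam eta I. x \<notin> open_segment (x + c *\<^sub>R d) b" by (rule bspec)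
  from this b have "x \<notin> open_segment (x + c *\<^sub>R d) (x + (- c) *\<^sub>R d)" by (rule bspec)
  then show False using xin by (rule notE)
qed



locale cs =
  fixes m :: nat and lam :: "nat \<Rightarrow> 'a::euclidean_space" and eta :: "nat \<Rightarrow> real"
  assumes sp: "simple_polytope m lam eta" and gc: "generic_cut m lam eta"
begin

abbreviation "G \<sigma> \<equiv> Fc lam eta {1..m} \<sigma>"
abbreviation "D \<equiv> Polyh lam eta {1..m}"
abbreviation "L x \<equiv> lam 0 \<bullet> x + eta 0"

lemma polyt_eq: "polyt m lam eta = D"
  by (simp add: polyt_def Polyh_def)

lemma plus_eq: "polyt_plus m lam eta = Polyh lam eta {0..m}"
  by (auto simp: polyt_plus_def polyt_def Polyh_def) (metis atLeastAtMost_iff le_0_eq not_less_eq_eq)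

lemma plus_eq2: "polyt_plus m lam eta = D \<inter> {x. L x \<ge> 0}"
  by (auto simp: polyt_plus_def polyt_def Polyh_def)

lemma Fc0: "Fc lam eta {0..m} \<sigma> = G \<sigma> \<inter> {x. L x \<ge> 0}"
  using plus_eq plus_eq2 by (auto simp: Fc_def)

lemma bounded_D: "bounded D"
  using sp by (simp add: simple_polytope_def polyt_eq)

lemma H0_ne: "facetH m lam eta 0 \<noteq> {}"
  using gc by (simp add: generic_cut_def)

lemma H0_point: obtains p where "p \<in> D" "L p = 0"
  using H0_ne by (auto simp: facetH_def hyp_def polyt_eq)

lemma G_sub: "G \<sigma> \<subseteq> D" by (auto simp: Fc_def)

lemma compact_G: "compact (G \<sigma>)"
  using closed_Fc bounded_subset[OF bounded_D G_sub] by (simp add: compact_eq_bounded_closed)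

lemma compact_G0: "compact (Fc lam eta {0..m} \<sigma>)"
proof -
  have "Fc lam eta {0..m} \<sigma> \<subseteq> D" using Fc0 G_sub by blast
  then show ?thesis using closed_Fc bounded_subset[OF bounded_D] by (simp add: compact_eq_bounded_closed)
qed

lemma ext_card: "w extreme_point_of D \<Longrightarrow> card (act lam eta {1..m} w) = DIM('a)"
  using sp by (simp add: simple_polytope_def polyt_eq act_def)

lemma ext_span: "w extreme_point_of D \<Longrightarrow> span (lam ` act lam eta {1..m} w) = UNIV"
  by (rule extreme_span) simp_all

lemma ext_indep:
  assumes w: "w extreme_point_of D"
  shows "inj_on lam (act lam eta {1..m} w) \<and> independent (lam ` act lam eta {1..m} w)"
proof -
  let ?A = "act lam eta {1..m} w"
  have fA: "finite ?A" by (simp add: act_def)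
  have sp1: "span (lam ` ?A) = UNIV" by (rule ext_span[OF w])
  have c1: "card (lam ` ?A) \<le> card ?A" by (rule card_image_le[OF fA])
  have c2: "dim (UNIV :: 'a set) \<le> card (lam ` ?A)"
    by (rule dim_le_card) (simp only: sp1 subset_refl, rule finite_imageI[OF fA])
  have "card (lam ` ?A) = card ?A" using c1 c2 ext_card[OF w] by simp
  then have inj: "inj_on lam ?A" using fA by (simp add: eq_card_imp_inj_on)
  have "independent (lam ` ?A)"
  proof (rule card_le_dim_spanning[of _ UNIV])
    show "UNIV \<subseteq> span (lam ` ?A)" by (simp only: sp1 subset_refl)
    show "finite (lam ` ?A)" by (rule finite_imageI[OF fA])
    show "card (lam ` ?A) \<le> dim (UNIV :: 'a set)" using c1 ext_card[OF w] by simp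
  qed simp
  then show ?thesis using inj by simp
qed

lemma gen:
  assumes "\<sigma> \<subseteq> {1..m}" "inj_on lam \<sigma>" "independent (lam ` \<sigma>)"
  shows "aff_dim ((\<Inter>i\<in>\<sigma>. hyp lam eta i) \<inter> hyp lam eta 0) = int DIM('a) - int (card \<sigma>) - 1"
proof -
  have "\<forall>\<sigma>. \<sigma> \<subseteq> {1..m} \<and> inj_on lam \<sigma> \<and> independent (lam ` \<sigma>) \<longrightarrow>
        aff_dim ((\<Inter>i\<in>\<sigma>. hyp lam eta i) \<inter> hyp lam eta 0) = int DIM('a) - int (card \<sigma>) - 1"
    using gc unfolding generic_cut_def by (elim conjE) assumption
  from this[rule_format, OF conjI[OF assms(1) conjI[OF assms(2) assms(3)]]] show ?thesis .
qed

lemma ext_L: assumes w: "w extreme_point_of D" shows "L w \<noteq> 0"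
proof
  assume L0: "L w = 0"
  let ?A = "act lam eta {1..m} w"
  have "?A \<subseteq> {1..m}" by (auto simp: act_def)
  then have "aff_dim ((\<Inter>i\<in>?A. hyp lam eta i) \<inter> hyp lam eta 0) = int DIM('a) - int (card ?A) - 1"
    using ext_indep[OF w] \<open>?A \<subseteq> {1..m}\<close> by (intro gen) auto
  moreover have "int DIM('a) - int (card ?A) - 1 = -1" using ext_card[OF w] by simp
  ultimately have "aff_dim ((\<Inter>i\<in>?A. hyp lam eta i) \<inter> hyp lam eta 0) = -1"
    by (rule trans)
  then have "(\<Inter>i\<in>?A. hyp lam eta i) \<inter> hyp lam eta 0 = {}" by (rule aff_dim_empty[THEN iffD2])
  moreover have "w \<in> (\<Inter>i\<in>?A. hyp lam eta i) \<inter> hyp lam eta 0"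
    using L0 by (auto simp: hyp_def act_def)
  ultimately show False by blast
qed

lemma extG: "\<sigma> \<subseteq> {1..m} \<Longrightarrow> w extreme_point_of G \<sigma> \<Longrightarrow> w extreme_point_of D"
  by (rule extreme_Fc)

lemma G_act: "w extreme_point_of D \<Longrightarrow> G (act lam eta {1..m} w) = {w}"
proof -
  assume w: "w extreme_point_of D"
  have "w \<in> G (act lam eta {1..m} w)" using w by (auto simp: extreme_point_of_def Fc_def act_def)
  moreover have "y = w" if "y \<in> G (act lam eta {1..m} w)" for y
    by (rule Fc_act_single[OF ext_span[OF w] that])
  ultimately show ?thesis by blast
qed

lemma exists_pos:
  assumes s: "\<sigma> \<subseteq> {1..m}" and p: "p \<in> G \<sigma>" "L p \<ge> 0"
  shows "\<exists>w. w extreme_point_of G \<sigma> \<and> L w > 0"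
proof (rule ccontr)
  assume "\<not> ?thesis"
  then have neg: "L w < 0" if "w extreme_point_of G \<sigma>" for w
    using ext_L[OF extG[OF s that]] that by force
  have "G \<sigma> = convex hull {w. w extreme_point_of G \<sigma>}"
    by (rule Krein_Milman_Minkowski[OF compact_G convex_Fc])
  also have "\<dots> \<subseteq> {x. lam 0 \<bullet> x < - eta 0}"
  proof (rule hull_minimal)
    show "{w. w extreme_point_of G \<sigma>} \<subseteq> {x. lam 0 \<bullet> x < - eta 0}"
    proof
      fix x assume "x \<in> {w. w extreme_point_of G \<sigma>}"
      then have "L x < 0" by (intro neg) (simp only: mem_Collect_eq)
      then show "x \<in> {x. lam 0 \<bullet> x < - eta 0}" by simp
    qed
  qed (rule convex_halfspace_lt)
  finally show False using p by auto
qed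

lemma exists_neg:
  assumes s: "\<sigma> \<subseteq> {1..m}" and p: "p \<in> G \<sigma>" "L p \<le> 0"
  shows "\<exists>w. w extreme_point_of G \<sigma> \<and> L w < 0"
proof (rule ccontr)
  assume "\<not> ?thesis"
  then have neg: "L w > 0" if "w extreme_point_of G \<sigma>" for w
    using ext_L[OF extG[OF s that]] that by force
  have "G \<sigma> = convex hull {w. w extreme_point_of G \<sigma>}"
    by (rule Krein_Milman_Minkowski[OF compact_G convex_Fc])
  also have "\<dots> \<subseteq> {x. lam 0 \<bullet> x > - eta 0}"
  proof (rule hull_minimal)
    show "{w. w extreme_point_of G \<sigma>} \<subseteq> {x. lam 0 \<bullet> x > - eta 0}"
    proof
      fix x assume "x \<in> {w. w extreme_point_of G \<sigma>}"
      then have "L x > 0" by (intro neg) (simp only: mem_Collect_eq)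
      then show "x \<in> {x. lam 0 \<bullet> x > - eta 0}" by simp
    qed
  qed (rule convex_halfspace_gt)
  finally show False using p by auto
qed


lemma D_ne: "D \<noteq> {}"
  using H0_point by blast

lemma G_anti: "\<sigma> \<subseteq> \<tau> \<Longrightarrow> G \<tau> \<subseteq> G \<sigma>"
  by (auto simp: Fc_def)

lemma G_zero: "0 \<in> \<sigma> \<Longrightarrow> x \<in> G \<sigma> \<Longrightarrow> L x = 0"
  by (auto simp: Fc_def)

lemma Fc_empty: "Fc lam' eta' I {} = Polyh lam' eta' I"
  by (simp add: Fc_def)

lemma G_empty: "G {} = D"
  by (simp add: Fc_def)

lemma facet_inter: "\<sigma> \<noteq> {} \<Longrightarrow> (\<Inter>i\<in>\<sigma>. facetH m lam eta i) = G \<sigma>"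
  unfolding facetH_def hyp_def polyt_eq Fc_def by blast

lemma facet_inter_plus: "\<sigma> \<noteq> {} \<Longrightarrow> (\<Inter>i\<in>\<sigma>. facetH m lam eta i \<inter> polyt_plus m lam eta) = G \<sigma> \<inter> {x. L x \<ge> 0}"
  unfolding facetH_def hyp_def polyt_eq Fc_def plus_eq2 by blast

lemma minus_eq: "polyt_minus m lam eta = D \<inter> {x. L x \<le> 0}"
  by (auto simp: polyt_minus_def polyt_def Polyh_def)

lemma facet_inter_minus: "\<sigma> \<noteq> {} \<Longrightarrow> (\<Inter>i\<in>\<sigma>. facetH m lam eta i \<inter> polyt_minus m lam eta) = G \<sigma> \<inter> {x. L x \<le> 0}"
  unfolding facetH_def hyp_def polyt_eq Fc_def minus_eq by blast

lemma KD_iff: "\<sigma> \<in> K_Delta m lam eta \<longleftrightarrow> \<sigma> \<subseteq> {1..m} \<and> G \<sigma> \<noteq> {}"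
proof (cases "\<sigma> = {}")
  case True
  then show ?thesis using D_ne by (simp add: K_Delta_def Fc_empty)
next
  case False
  have e: "(\<Inter>i\<in>\<sigma>. facetH m lam eta i) = G \<sigma>"
    by (rule facet_inter[OF False])
  show ?thesis unfolding K_Delta_def Un_iff mem_Collect_eq singleton_iff e using False by simp
qed

lemma KP_iff: "\<sigma> \<in> K_plus m lam eta \<longleftrightarrow> \<sigma> \<subseteq> {0..m} \<and> G \<sigma> \<inter> {x. L x \<ge> 0} \<noteq> {}"
proof (cases "\<sigma> = {}")
  case True
  obtain p where "p \<in> D" "L p = 0" by (rule H0_point)
  then have "G \<sigma> \<inter> {x. L x \<ge> 0} \<noteq> {}" using True G_empty by auto
  then show ?thesis using True by (simp add: K_plus_def)
next
  case False
  have e: "(\<Inter>i\<in>\<sigma>. facetH m lam eta i \<inter> polyt_plus m lam eta) = G \<sigma> \<inter> {x. L x \<ge> 0}"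
    by (rule facet_inter_plus[OF False])
  show ?thesis unfolding K_plus_def Un_iff mem_Collect_eq singleton_iff e using False by simp
qed

lemma KM_iff: "\<sigma> \<in> K_minus m lam eta \<longleftrightarrow> \<sigma> \<subseteq> {0..m} \<and> G \<sigma> \<inter> {x. L x \<le> 0} \<noteq> {}"
proof (cases "\<sigma> = {}")
  case True
  obtain p where "p \<in> D" "L p = 0" by (rule H0_point)
  then have "G \<sigma> \<inter> {x. L x \<le> 0} \<noteq> {}" using True G_empty by auto
  then show ?thesis using True by (simp add: K_minus_def)
next
  case False
  have e: "(\<Inter>i\<in>\<sigma>. facetH m lam eta i \<inter> polyt_minus m lam eta) = G \<sigma> \<inter> {x. L x \<le> 0}"
    by (rule facet_inter_minus[OF False])
  show ?thesis unfolding K_minus_def Un_iff mem_Collect_eq singleton_iff e using False by simp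
qed

lemma Z_iff: "\<sigma> \<in> cut_Z m lam eta \<longleftrightarrow> \<sigma> \<subseteq> {0..m} \<and> \<sigma> \<noteq> {} \<and> G \<sigma> \<noteq> {} \<and> G \<sigma> \<subseteq> {x. L x > 0}"
proof (cases "\<sigma> = {}")
  case True
  have "\<not> (UNIV \<subseteq> polyt_plus m lam eta - facetH m lam eta 0)"
  proof
    assume "UNIV \<subseteq> polyt_plus m lam eta - facetH m lam eta 0"
    then have "D = UNIV" unfolding plus_eq2 by blast
    then show False using bounded_D not_bounded_UNIV by metis
  qed
  then show ?thesis using True by (simp add: cut_Z_def)
next
  case False
  have e: "polyt_plus m lam eta - facetH m lam eta 0 = D \<inter> {x. L x > 0}"
    unfolding plus_eq2 facetH_def polyt_eq hyp_def by auto
  have "G \<sigma> \<subseteq> D \<inter> {x. L x > 0} \<longleftrightarrow> G \<sigma> \<subseteq> {x. L x > 0}" using G_sub by blast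
  moreover have e2: "(\<Inter>i\<in>\<sigma>. facetH m lam eta i) = G \<sigma>"
    by (rule facet_inter[OF False])
  ultimately show ?thesis using False unfolding cut_Z_def mem_Collect_eq e2 e by blast
qed

lemma ivt:
  assumes S: "convex S" and p: "p \<in> S" "L p \<ge> 0" and q: "q \<in> S" "L q \<le> 0"
  shows "\<exists>r\<in>S. L r = 0"
proof (cases "L p = 0")
  case True then show ?thesis using p by blast
next
  case False
  then have pp: "L p > 0" using p by simp
  define t where "t = L p / (L p - L q)"
  have t: "0 \<le> t" "t \<le> 1" using pp q by (auto simp: t_def field_simps)
  define r where "r = (1 - t) *\<^sub>R p + t *\<^sub>R q"
  have "r \<in> S" unfolding r_def using S p q t by (simp add: convexD_alt)
  moreover have "L r = (1 - t) * L p + t * L q"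
    unfolding r_def by (simp add: inner_add_right algebra_simps)
  moreover have "(1 - t) * L p + t * L q = 0"
    using pp q by (simp add: t_def field_simps)
  ultimately show ?thesis by auto
qed

lemma sc_KD: "simplicial_complex {0..m} (K_Delta m lam eta)"
  unfolding simplicial_complex_def
proof (intro conjI ballI allI impI)
  show "{} \<in> K_Delta m lam eta" using D_ne by (simp add: KD_iff Fc_empty)
next
  fix \<sigma> assume "\<sigma> \<in> K_Delta m lam eta" then show "\<sigma> \<subseteq> {0..m}" by (auto simp: KD_iff)
next
  fix \<sigma> \<tau> assume s: "\<sigma> \<in> K_Delta m lam eta" and t: "\<tau> \<subseteq> \<sigma>"
  then show "\<tau> \<in> K_Delta m lam eta" using G_anti[OF t] unfolding KD_iff by blast
qed simp

lemma sc_KP: "simplicial_complex {0..m} (K_plus m lam eta)"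
  unfolding simplicial_complex_def
proof (intro conjI ballI allI impI)
  show "{} \<in> K_plus m lam eta" by (simp add: K_plus_def)
next
  fix \<sigma> assume "\<sigma> \<in> K_plus m lam eta" then show "\<sigma> \<subseteq> {0..m}" by (auto simp: KP_iff)
next
  fix \<sigma> \<tau> assume s: "\<sigma> \<in> K_plus m lam eta" and t: "\<tau> \<subseteq> \<sigma>"
  then show "\<tau> \<in> K_plus m lam eta" using G_anti[OF t] unfolding KP_iff by blast
qed simp

lemma Z_zero: "\<sigma> \<in> cut_Z m lam eta \<Longrightarrow> 0 \<notin> \<sigma>"
  unfolding Z_iff using G_zero by fastforce

lemma sub1: "\<sigma> \<subseteq> {0..m} \<Longrightarrow> 0 \<notin> \<sigma> \<Longrightarrow> \<sigma> \<subseteq> {1..m}"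
  by (metis atLeastAtMost_iff not_one_le_zero le_antisym less_one not_le subset_eq)

lemma Gpos: "G \<sigma> \<noteq> {} \<Longrightarrow> G \<sigma> \<subseteq> {x. L x > 0} \<Longrightarrow> G \<sigma> \<inter> {x. L x \<ge> 0} \<noteq> {}"
  by force

lemma Z_sub: "cut_Z m lam eta \<subseteq> K_plus m lam eta \<inter> K_Delta m lam eta"
proof
  fix \<sigma> assume s: "\<sigma> \<in> cut_Z m lam eta"
  then have "0 \<notin> \<sigma>" by (rule Z_zero)
  moreover have "\<sigma> \<subseteq> {0..m}" "G \<sigma> \<noteq> {}" "G \<sigma> \<subseteq> {x. L x > 0}" using s by (auto simp: Z_iff)
  ultimately have "\<sigma> \<subseteq> {1..m}" "G \<sigma> \<inter> {x. L x \<ge> 0} \<noteq> {}" using sub1 Gpos by blast+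
  then show "\<sigma> \<in> K_plus m lam eta \<inter> K_Delta m lam eta"
    using \<open>\<sigma> \<subseteq> {0..m}\<close> \<open>G \<sigma> \<noteq> {}\<close> by (simp add: KP_iff KD_iff)
qed


lemma O_sub: "O_cx (K_plus m lam eta \<union> K_Delta m lam eta) (cut_Z m lam eta) \<subseteq> K_plus m lam eta \<inter> K_Delta m lam eta"
proof
  fix \<sigma> assume "\<sigma> \<in> O_cx (K_plus m lam eta \<union> K_Delta m lam eta) (cut_Z m lam eta)"
  then obtain \<tau> where s: "\<sigma> \<in> K_plus m lam eta \<union> K_Delta m lam eta" and t: "\<tau> \<in> cut_Z m lam eta" "\<tau> \<subseteq> \<sigma>"
    unfolding O_cx_def by blast
  have s0: "\<sigma> \<subseteq> {0..m}" and gne: "G \<sigma> \<noteq> {}" using s unfolding Un_iff KP_iff KD_iff by auto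
  have "G \<sigma> \<subseteq> {x. L x > 0}" using G_anti[OF t(2)] t(1) unfolding Z_iff by blast
  then have z: "0 \<notin> \<sigma>" using gne G_zero by fastforce
  have s1: "\<sigma> \<subseteq> {1..m}" by (rule sub1[OF s0 z])
  have "G \<sigma> \<inter> {x. L x \<ge> 0} \<noteq> {}" by (rule Gpos[OF gne]) fact
  then show "\<sigma> \<in> K_plus m lam eta \<inter> K_Delta m lam eta"
    using s0 s1 gne unfolding Int_iff KP_iff KD_iff by blast
qed

lemma act_in_KD: "w extreme_point_of D \<Longrightarrow> act lam eta {1..m} w \<in> K_Delta m lam eta"
  using G_act unfolding KD_iff by (auto simp: act_def)

lemma sub_act: "\<sigma> \<subseteq> I \<Longrightarrow> w \<in> Fc lam eta I \<sigma> \<Longrightarrow> \<sigma> \<subseteq> act lam eta I w"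
  by (auto simp: Fc_def act_def)

lemma pure_KD: "pure_card (K_Delta m lam eta) DIM('a)"
  unfolding pure_card_def
proof (intro ballI impI)
  fix \<sigma> assume s: "\<sigma> \<in> K_Delta m lam eta" and mx: "\<forall>\<tau>\<in>K_Delta m lam eta. \<sigma> \<subseteq> \<tau> \<longrightarrow> \<tau> = \<sigma>"
  have s1: "\<sigma> \<subseteq> {1..m}" and ne: "G \<sigma> \<noteq> {}" using s unfolding KD_iff by auto
  obtain w where w: "w extreme_point_of G \<sigma>"
    using extreme_point_exists_convex[OF compact_G convex_Fc ne] by blast
  have wD: "w extreme_point_of D" by (rule extG[OF s1 w])
  have "\<sigma> \<subseteq> act lam eta {1..m} w"
    using sub_act[OF s1] w by (simp add: extreme_point_of_def)
  then have "act lam eta {1..m} w = \<sigma>" using mx act_in_KD[OF wD] by blast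
  then show "card \<sigma> = DIM('a)" using ext_card[OF wD] by simp
qed

lemma pure_int: "pure_card (K_plus m lam eta \<inter> K_Delta m lam eta) DIM('a)"
  unfolding pure_card_def
proof (intro ballI impI)
  fix \<sigma> assume s: "\<sigma> \<in> K_plus m lam eta \<inter> K_Delta m lam eta"
    and mx: "\<forall>\<tau>\<in>K_plus m lam eta \<inter> K_Delta m lam eta. \<sigma> \<subseteq> \<tau> \<longrightarrow> \<tau> = \<sigma>"
  have s1: "\<sigma> \<subseteq> {1..m}" and ne: "G \<sigma> \<inter> {x. L x \<ge> 0} \<noteq> {}" using s unfolding Int_iff KD_iff KP_iff by auto
  then obtain p where p: "p \<in> G \<sigma>" "L p \<ge> 0" by blast
  obtain w where w: "w extreme_point_of G \<sigma>" "L w > 0" using exists_pos[OF s1 p] by blast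
  have wD: "w extreme_point_of D" by (rule extG[OF s1 w(1)])
  have "\<sigma> \<subseteq> act lam eta {1..m} w"
    using sub_act[OF s1] w by (simp add: extreme_point_of_def)
  moreover have "act lam eta {1..m} w \<in> K_plus m lam eta"
  proof -
    have "w \<in> G (act lam eta {1..m} w)" using G_act[OF wD] by blast
    then show ?thesis using w(2) unfolding KP_iff by (auto simp: act_def)
  qed
  ultimately have "act lam eta {1..m} w = \<sigma>" using mx act_in_KD[OF wD] by blast
  then show "card \<sigma> = DIM('a)" using ext_card[OF wD] by simp
qed


lemma pure_KP: "pure_card (K_plus m lam eta) DIM('a)"
  unfolding pure_card_def
proof (intro ballI impI)
  fix \<sigma> assume s: "\<sigma> \<in> K_plus m lam eta" and mx: "\<forall>\<tau>\<in>K_plus m lam eta. \<sigma> \<subseteq> \<tau> \<longrightarrow> \<tau> = \<sigma>"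
  have s0: "\<sigma> \<subseteq> {0..m}" and ne: "Fc lam eta {0..m} \<sigma> \<noteq> {}" using s unfolding KP_iff Fc0 by auto
  obtain w where w: "w extreme_point_of Fc lam eta {0..m} \<sigma>"
    using extreme_point_exists_convex[OF compact_G0 convex_Fc ne] by blast
  have wP: "w extreme_point_of Polyh lam eta {0..m}" by (rule extreme_Fc[OF s0 w])
  let ?T = "act lam eta {0..m} w"
  have wPP: "w \<in> Polyh lam eta {0..m}" using wP by (simp add: extreme_point_of_def)
  have wT: "w \<in> Fc lam eta {0..m} ?T" using wPP by (auto simp: Fc_def act_def)
  have sT: "\<sigma> \<subseteq> ?T" using sub_act[OF s0] w by (simp add: extreme_point_of_def)
  have "?T \<in> K_plus m lam eta" using wT unfolding KP_iff Fc0[symmetric] by (auto simp: act_def)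
  then have Teq: "?T = \<sigma>" using mx sT by blast
  have spT: "span (lam ` ?T) = UNIV" by (rule extreme_span[OF _ wP]) simp
  have wD: "w \<in> D" using wPP plus_eq plus_eq2 by blast
  have Lw: "L w \<ge> 0" using wPP plus_eq plus_eq2 by blast
  have "card ?T = DIM('a)"
  proof (cases "L w = 0")
    case False
    then have TS: "?T = act lam eta {1..m} w" by (auto simp: act_def Suc_le_eq intro!: gr0I)
    have "w extreme_point_of D" by (rule span_extreme[OF wD]) (use spT TS in simp)
    then show ?thesis using ext_card TS by simp
  next
    case True
    let ?S = "act lam eta {1..m} w"
    have TS: "?T = insert 0 ?S" using True by (auto simp: act_def)
    have fS: "finite ?S" by (simp add: act_def)
    have S0: "0 \<notin> ?S" by (simp add: act_def)
    have cT: "card ?T = Suc (card ?S)" using TS fS S0 by simp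
    have "dim (UNIV :: 'a set) \<le> card (lam ` ?T)"
      by (rule dim_le_card) (simp only: spT subset_refl, simp add: act_def)
    also have "\<dots> \<le> card ?T" by (rule card_image_le) (simp add: act_def)
    finally have lo: "DIM('a) \<le> card ?T" by simp
    have S1: "?S \<subseteq> {1..m}" by (auto simp: act_def)
    have wS: "w \<in> G ?S" using wD by (auto simp: Fc_def act_def)
    then have neS: "G ?S \<noteq> {}" by blast
    obtain u where u: "u extreme_point_of G ?S"
      using extreme_point_exists_convex[OF compact_G convex_Fc neS] by blast
    have uD: "u extreme_point_of D" by (rule extG[OF S1 u])
    have Su: "?S \<subseteq> act lam eta {1..m} u"
      using sub_act[OF S1] u by (simp add: extreme_point_of_def)
    have inj: "inj_on lam ?S" using ext_indep[OF uD] Su inj_on_subset by blast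
    have ind: "independent (lam ` ?S)"
      using ext_indep[OF uD] Su independent_mono image_mono by metis
    have ad: "aff_dim ((\<Inter>i\<in>?S. hyp lam eta i) \<inter> hyp lam eta 0) = int DIM('a) - int (card ?S) - 1"
      by (rule gen[OF S1 inj ind])
    have "w \<in> (\<Inter>i\<in>?S. hyp lam eta i) \<inter> hyp lam eta 0" using True by (auto simp: hyp_def act_def)
    then have ne: "(\<Inter>i\<in>?S. hyp lam eta i) \<inter> hyp lam eta 0 \<noteq> {}"
      by (rule ex_in_conv[THEN iffD1, OF exI])
    have "aff_dim ((\<Inter>i\<in>?S. hyp lam eta i) \<inter> hyp lam eta 0) \<noteq> -1"
    proof
      assume "aff_dim ((\<Inter>i\<in>?S. hyp lam eta i) \<inter> hyp lam eta 0) = -1"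
      then have "(\<Inter>i\<in>?S. hyp lam eta i) \<inter> hyp lam eta 0 = {}" by (rule aff_dim_empty[THEN iffD2])
      then show False using ne by (rule notE[rotated])
    qed
    moreover have "aff_dim ((\<Inter>i\<in>?S. hyp lam eta i) \<inter> hyp lam eta 0) \<ge> -1" by (rule aff_dim_geq)
    ultimately have "int DIM('a) - int (card ?S) - 1 \<ge> 0" using ad by linarith
    then have "card ?T \<le> DIM('a)" using cT by linarith
    then show ?thesis using lo by simp
  qed
  then show "card \<sigma> = DIM('a)" using Teq by simp
qed


lemma Z_in_int: "\<tau> \<in> cut_Z m lam eta \<Longrightarrow> \<tau> \<in> K_plus m lam eta \<inter> K_Delta m lam eta"
  using Z_sub by blast

lemma Z_eq1: "cut_Z m lam eta = (K_plus m lam eta \<inter> K_Delta m lam eta)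
     - cl_cx (K_plus m lam eta - (K_plus m lam eta \<inter> K_Delta m lam eta))"
proof (intro set_eqI iffI)
  fix \<tau> assume t: "\<tau> \<in> cut_Z m lam eta"
  have tz: "\<tau> \<noteq> {}" "G \<tau> \<subseteq> {x. L x > 0}" using t unfolding Z_iff by auto
  have "\<tau> \<notin> cl_cx (K_plus m lam eta - (K_plus m lam eta \<inter> K_Delta m lam eta))"
  proof
    assume "\<tau> \<in> cl_cx (K_plus m lam eta - (K_plus m lam eta \<inter> K_Delta m lam eta))"
    then obtain \<sigma> where s: "\<sigma> \<in> K_plus m lam eta" "\<sigma> \<notin> K_Delta m lam eta" "\<tau> \<subseteq> \<sigma>"
      using tz(1) unfolding cl_cx_def by blast
    have s0: "\<sigma> \<subseteq> {0..m}" and sne: "G \<sigma> \<inter> {x. L x \<ge> 0} \<noteq> {}" using s(1) unfolding KP_iff by auto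
    have "0 \<in> \<sigma>"
    proof (rule ccontr)
      assume "0 \<notin> \<sigma>"
      then have "\<sigma> \<subseteq> {1..m}" by (rule sub1[OF s0])
      then show False using s(2) sne unfolding KD_iff by blast
    qed
    then obtain x where "x \<in> G \<sigma>" "L x = 0" using sne G_zero by blast
    then show False using G_anti[OF s(3)] tz(2) by force
  qed
  then show "\<tau> \<in> (K_plus m lam eta \<inter> K_Delta m lam eta) - cl_cx (K_plus m lam eta - (K_plus m lam eta \<inter> K_Delta m lam eta))"
    using Z_in_int[OF t] by blast
next
  fix \<tau> assume t: "\<tau> \<in> (K_plus m lam eta \<inter> K_Delta m lam eta) - cl_cx (K_plus m lam eta - (K_plus m lam eta \<inter> K_Delta m lam eta))"
  have t1: "\<tau> \<subseteq> {1..m}" and tp: "G \<tau> \<inter> {x. L x \<ge> 0} \<noteq> {}" using t unfolding Diff_iff Int_iff KD_iff KP_iff by auto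
  have tne: "\<tau> \<noteq> {}" using t unfolding cl_cx_def by blast
  have ncl: "\<not> (\<exists>\<sigma>. \<sigma> \<in> K_plus m lam eta \<and> \<sigma> \<notin> K_Delta m lam eta \<and> \<tau> \<subseteq> \<sigma>)"
    using t unfolding cl_cx_def by blast
  obtain p where p: "p \<in> G \<tau>" "L p \<ge> 0" using tp by blast
  have pos: "G \<tau> \<subseteq> {x. L x > 0}"
  proof (rule ccontr)
    assume "\<not> G \<tau> \<subseteq> {x. L x > 0}"
    then obtain q where q: "q \<in> G \<tau>" "L q \<le> 0" by force
    obtain r where r: "r \<in> G \<tau>" "L r = 0" using ivt[OF convex_Fc p q] by blast
    have "insert 0 \<tau> \<in> K_plus m lam eta"
    proof -
      have "r \<in> G (insert 0 \<tau>)" using r by (auto simp: Fc_def)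
      moreover have "insert 0 \<tau> \<subseteq> {0..m}" using t1 by auto
      ultimately show ?thesis using r(2) unfolding KP_iff by force
    qed
    moreover have "insert 0 \<tau> \<notin> K_Delta m lam eta" unfolding KD_iff by auto
    ultimately show False using ncl by blast
  qed
  have "\<tau> \<subseteq> {0..m}" using t1 by auto
  then show "\<tau> \<in> cut_Z m lam eta" unfolding Z_iff using tne pos p(1) by blast
qed

lemma Z_eq2: "cut_Z m lam eta = (K_plus m lam eta \<inter> K_Delta m lam eta)
     - cl_cx (K_Delta m lam eta - (K_plus m lam eta \<inter> K_Delta m lam eta))"
proof (intro set_eqI iffI)
  fix \<tau> assume t: "\<tau> \<in> cut_Z m lam eta"
  have tz: "\<tau> \<noteq> {}" "G \<tau> \<subseteq> {x. L x > 0}" using t unfolding Z_iff by auto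
  have "\<tau> \<notin> cl_cx (K_Delta m lam eta - (K_plus m lam eta \<inter> K_Delta m lam eta))"
  proof
    assume "\<tau> \<in> cl_cx (K_Delta m lam eta - (K_plus m lam eta \<inter> K_Delta m lam eta))"
    then obtain \<sigma> where s: "\<sigma> \<in> K_Delta m lam eta" "\<sigma> \<notin> K_plus m lam eta" "\<tau> \<subseteq> \<sigma>"
      using tz(1) unfolding cl_cx_def by blast
    have s1: "\<sigma> \<subseteq> {1..m}" and sne: "G \<sigma> \<noteq> {}" using s(1) unfolding KD_iff by auto
    have "G \<sigma> \<subseteq> {x. L x > 0}" using G_anti[OF s(3)] tz(2) by blast
    then have "G \<sigma> \<inter> {x. L x \<ge> 0} \<noteq> {}" by (rule Gpos[OF sne])
    moreover have "\<sigma> \<subseteq> {0..m}" using s1 by auto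
    ultimately show False using s(2) unfolding KP_iff by blast
  qed
  then show "\<tau> \<in> (K_plus m lam eta \<inter> K_Delta m lam eta) - cl_cx (K_Delta m lam eta - (K_plus m lam eta \<inter> K_Delta m lam eta))"
    using Z_in_int[OF t] by blast
next
  fix \<tau> assume t: "\<tau> \<in> (K_plus m lam eta \<inter> K_Delta m lam eta) - cl_cx (K_Delta m lam eta - (K_plus m lam eta \<inter> K_Delta m lam eta))"
  have t1: "\<tau> \<subseteq> {1..m}" and tp: "G \<tau> \<inter> {x. L x \<ge> 0} \<noteq> {}" using t unfolding Diff_iff Int_iff KD_iff KP_iff by auto
  have tne: "\<tau> \<noteq> {}" using t unfolding cl_cx_def by blast
  have ncl: "\<not> (\<exists>\<sigma>. \<sigma> \<in> K_Delta m lam eta \<and> \<sigma> \<notin> K_plus m lam eta \<and> \<tau> \<subseteq> \<sigma>)"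
    using t unfolding cl_cx_def by blast
  obtain p where p: "p \<in> G \<tau>" "L p \<ge> 0" using tp by blast
  have pos: "G \<tau> \<subseteq> {x. L x > 0}"
  proof (rule ccontr)
    assume "\<not> G \<tau> \<subseteq> {x. L x > 0}"
    then obtain q where q: "q \<in> G \<tau>" "L q \<le> 0" by force
    obtain w where w: "w extreme_point_of G \<tau>" "L w < 0" using exists_neg[OF t1 q] by blast
    have wD: "w extreme_point_of D" by (rule extG[OF t1 w(1)])
    have tA: "\<tau> \<subseteq> act lam eta {1..m} w"
      using sub_act[OF t1] w(1) by (simp add: extreme_point_of_def)
    have "act lam eta {1..m} w \<notin> K_plus m lam eta"
      unfolding KP_iff G_act[OF wD] using w(2) by auto
    then show False using ncl act_in_KD[OF wD] tA by blast
  qed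
  have "\<tau> \<subseteq> {0..m}" using t1 by auto
  then show "\<tau> \<in> cut_Z m lam eta" unfolding Z_iff using tne pos p(1) by blast
qed

lemma KM_eq: "K_minus m lam eta = conn_sum (K_plus m lam eta) (K_Delta m lam eta) (cut_Z m lam eta)"
  unfolding conn_sum_def Del_cx_def O_cx_def
proof (intro set_eqI iffI)
  fix \<sigma> assume s: "\<sigma> \<in> K_minus m lam eta"
  have s0: "\<sigma> \<subseteq> {0..m}" and sn: "G \<sigma> \<inter> {x. L x \<le> 0} \<noteq> {}" using s unfolding KM_iff by auto
  obtain x where x: "x \<in> G \<sigma>" "L x \<le> 0" using sn by blast
  have inU: "\<sigma> \<in> K_plus m lam eta \<union> K_Delta m lam eta"
  proof (cases "0 \<in> \<sigma>")
    case True
    then have "L x = 0" using G_zero x(1) by blast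
    then have "\<sigma> \<in> K_plus m lam eta" unfolding KP_iff using s0 x(1) by force
    then show ?thesis by blast
  next
    case False
    then have "\<sigma> \<subseteq> {1..m}" by (rule sub1[OF s0])
    then have "\<sigma> \<in> K_Delta m lam eta" unfolding KD_iff using x(1) by blast
    then show ?thesis by blast
  qed
  have "\<not> (\<exists>\<tau>\<in>cut_Z m lam eta. \<tau> \<subseteq> \<sigma>)"
  proof
    assume "\<exists>\<tau>\<in>cut_Z m lam eta. \<tau> \<subseteq> \<sigma>"
    then obtain \<tau> where "\<tau> \<in> cut_Z m lam eta" "\<tau> \<subseteq> \<sigma>" by blast
    then have "G \<sigma> \<subseteq> {x. L x > 0}" using G_anti unfolding Z_iff by blast
    then show False using x by force
  qed
  then show "\<sigma> \<in> K_plus m lam eta \<union> K_Delta m lam eta -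
        {\<sigma> \<in> K_plus m lam eta \<union> K_Delta m lam eta. \<exists>\<tau>\<in>cut_Z m lam eta. \<tau> \<subseteq> \<sigma>}"
    using inU by blast
next
  fix \<sigma> assume s: "\<sigma> \<in> K_plus m lam eta \<union> K_Delta m lam eta -
        {\<sigma> \<in> K_plus m lam eta \<union> K_Delta m lam eta. \<exists>\<tau>\<in>cut_Z m lam eta. \<tau> \<subseteq> \<sigma>}"
  then have sU: "\<sigma> \<in> K_plus m lam eta \<union> K_Delta m lam eta" and nz: "\<sigma> \<notin> cut_Z m lam eta" by blast+
  have s0: "\<sigma> \<subseteq> {0..m}" and gne: "G \<sigma> \<noteq> {}" using sU unfolding Un_iff KP_iff KD_iff by auto
  have "\<not> G \<sigma> \<subseteq> {x. L x > 0}"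
  proof
    assume pos: "G \<sigma> \<subseteq> {x. L x > 0}"
    show False
    proof (cases "\<sigma> = {}")
      case True
      obtain p where "p \<in> D" "L p = 0" by (rule H0_point)
      then show False using pos True G_empty by force
    next
      case False
      then show False using nz s0 gne pos unfolding Z_iff by blast
    qed
  qed
  then have "G \<sigma> \<inter> {x. L x \<le> 0} \<noteq> {}" by force
  then show "\<sigma> \<in> K_minus m lam eta" unfolding KM_iff using s0 by blast
qed

end

theorem theorem3p12:
  fixes m :: nat and lam :: "nat \<Rightarrow> 'a::euclidean_space" and eta :: "nat \<Rightarrow> real"
  assumes "simple_polytope m lam eta"
    and "generic_cut m lam eta"
  shows "strong_conn_sum_ok {0..m} (K_plus m lam eta) (K_Delta m lam eta) (cut_Z m lam eta)
       \<and> K_minus m lam eta = conn_sum (K_plus m lam eta) (K_Delta m lam eta) (cut_Z m lam eta)"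
proof -
  interpret cs m lam eta by (rule cs.intro) (rule assms(1), rule assms(2))
  have e: "{} \<notin> cut_Z m lam eta" unfolding Z_iff by blast
  have c: "conn_sum_ok {0..m} (K_plus m lam eta) (K_Delta m lam eta) (cut_Z m lam eta)"
    unfolding conn_sum_ok_def using sc_KP sc_KD Z_sub e O_sub by blast
  have p: "\<exists>d. pure_card (K_plus m lam eta) d \<and> pure_card (K_Delta m lam eta) d
             \<and> pure_card (K_plus m lam eta \<inter> K_Delta m lam eta) d"
    using pure_KP pure_KD pure_int by blast
  show ?thesis unfolding strong_conn_sum_ok_def using c p Z_eq1 Z_eq2 KM_eq by blast
qed

end
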